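(* For every $m\ge2$, no vertex of the unweighted subdivided star $G(m)$ is sedentary.
   Context: $G(m)$ is obtained from the star $K_{1,m}$ by subdividing each edge once: it has a central vertex of degree $m$ joined to $m$ vertices of degree two, each of which is adjacent to one further leaf (so $G(m)$ has $2m+1$ vertices). For a graph with adjacency matrix $A$, $U(t)=e^{itA}$; a vertex $u$ is sedentary if $\inf_{t>0}|U(t)_{u,u}|\ge C$ for some constant $0<C\le1$, and not sedentary if this infimum is $0$. *)

theory Defs
  imports Complex_Main "Jordan_Normal_Form.Matrix"
begin

(* Vertices of G(m) are 0..2m: 0 is the centre, 1..m are the degree-two
   vertices, and m+j (1 <= j <= m) is the leaf attached to j. *)
definition subdiv_star_edge :: "nat \<Rightarrow> nat \<Rightarrow> nat \<Rightarrow> bool" where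
  "subdiv_star_edge m i j \<longleftrightarrow>
     (i = 0 \<and> 1 \<le> j \<and> j \<le> m) \<or> (j = 0 \<and> 1 \<le> i \<and> i \<le> m) \<or>
     (1 \<le> i \<and> i \<le> m \<and> j = i + m) \<or> (1 \<le> j \<and> j \<le> m \<and> i = j + m)"

definition subdiv_star_adj :: "nat \<Rightarrow> complex mat" where
  "subdiv_star_adj m = mat (2*m+1) (2*m+1)
      (\<lambda>(i,j). if subdiv_star_edge m i j then 1 else 0)"

definition transition_entry :: "complex mat \<Rightarrow> real \<Rightarrow> nat \<Rightarrow> nat \<Rightarrow> complex" where
  "transition_entry A t u v = (\<Sum>k. ((\<i> * of_real t) ^ k / of_nat (fact k)) * (A ^\<^sub>m k) $$ (u, v))"

definition sedentary :: "complex mat \<Rightarrow> nat \<Rightarrow> bool" where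
  "sedentary A u \<longleftrightarrow>
     (\<exists>C::real. 0 < C \<and> C \<le> 1 \<and> (INF t\<in>{0<..}. cmod (transition_entry A t u u)) \<ge> C)"

end

theory Submission
  imports Defs
begin

lemma adj_dim[simp]: "dim_row (subdiv_star_adj m) = 2*m+1" "dim_col (subdiv_star_adj m) = 2*m+1"
  by (auto simp: subdiv_star_adj_def)

lemma adj_entry: "i < 2*m+1 \<Longrightarrow> j < 2*m+1 \<Longrightarrow>
  subdiv_star_adj m $$ (i,j) = (if subdiv_star_edge m i j then 1 else 0)"
  unfolding subdiv_star_adj_def by (subst index_mat) auto

lemma nbr_sum:
  fixes F :: "nat \<Rightarrow> complex"
  assumes i: "i < 2*m+1"
  shows "(\<Sum>l\<in>{0..<2*m+1}. F l * subdiv_star_adj m $$ (l,i)) =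
    (if i = 0 then (\<Sum>l\<in>{1..m}. F l) else if i \<le> m then F 0 + F (i+m) else F (i-m))"
proof -
  have "(\<Sum>l\<in>{0..<2*m+1}. F l * subdiv_star_adj m $$ (l,i)) =
        (\<Sum>l\<in>{0..<2*m+1}. if subdiv_star_edge m l i then F l else 0)"
    using i by (intro sum.cong) (auto simp: adj_entry)
  also have "\<dots> = (\<Sum>l\<in>{l\<in>{0..<2*m+1}. subdiv_star_edge m l i}. F l)"
    by (rule sum.inter_filter[symmetric]) simp
  also have "\<dots> = (if i = 0 then (\<Sum>l\<in>{1..m}. F l) else if i \<le> m then F 0 + F (i+m) else F (i-m))"
  proof (cases "i = 0")
    case True
    then have "{l\<in>{0..<2*m+1}. subdiv_star_edge m l i} = {1..m}"
      by (auto simp: subdiv_star_edge_def)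
    then show ?thesis using True by simp
  next
    case False
    show ?thesis
    proof (cases "i \<le> m")
      case True
      then have "{l\<in>{0..<2*m+1}. subdiv_star_edge m l i} = {0, i+m}"
        using False by (auto simp: subdiv_star_edge_def)
      then show ?thesis using True False by simp
    next
      case c2: False
      then have "{l\<in>{0..<2*m+1}. subdiv_star_edge m l i} = {i-m}"
        using False i by (auto simp: subdiv_star_edge_def)
      then show ?thesis using c2 False by simp
    qed
  qed
  finally show ?thesis .
qed

lemma pow_row:
  fixes G :: "nat \<Rightarrow> nat \<Rightarrow> complex"
  assumes u: "u < 2*m+1"
    and G0: "\<And>l. l < 2*m+1 \<Longrightarrow> G 0 l = (if l = u then 1 else 0)"
    and GS: "\<And>k i. i < 2*m+1 \<Longrightarrow>
       (if i = 0 then (\<Sum>l\<in>{1..m}. G k l) else if i \<le> m then G k 0 + G k (i+m) else G k (i-m)) = G (Suc k) i"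
  shows "i < 2*m+1 \<Longrightarrow> (subdiv_star_adj m ^\<^sub>m k) $$ (u,i) = G k i"
proof (induction k arbitrary: i)
  case 0
  then show ?case using u G0 by simp
next
  case (Suc k)
  have "(subdiv_star_adj m ^\<^sub>m Suc k) $$ (u,i) =
     (\<Sum>l\<in>{0..<2*m+1}. (subdiv_star_adj m ^\<^sub>m k) $$ (u,l) * subdiv_star_adj m $$ (l,i))"
    using Suc.prems u by (simp add: scalar_prod_def)
  also have "\<dots> = (\<Sum>l\<in>{0..<2*m+1}. G k l * subdiv_star_adj m $$ (l,i))"
    by (rule sum.cong, auto simp: Suc.IH)
  also have "\<dots> = G (Suc k) i" using nbr_sum[OF Suc.prems, of "G k"] GS[OF Suc.prems] by simp
  finally show ?case .
qed

definition ee :: "nat \<Rightarrow> complex" where "ee k = (1 + (-1)^k)/2"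
definition oo :: "nat \<Rightarrow> complex" where "oo k = (1 - (-1)^k)/2"
definition EE :: "complex \<Rightarrow> nat \<Rightarrow> complex" where "EE s k = (s^k + (-s)^k)/2"
definition ZZ :: "nat \<Rightarrow> complex" where "ZZ k = (if k = 0 then 1 else 0)"

lemma ee_simps[simp]: "ee 0 = 1" "ee (Suc k) = oo k" "oo 0 = 0" "oo (Suc k) = ee k"
  by (auto simp: ee_def oo_def)
lemma EE_simps[simp]: "EE s 0 = 1" "EE s (Suc 0) = 0" "EE s (Suc (Suc k)) = s^2 * EE s k"
  by (auto simp: EE_def power2_eq_square algebra_simps)
lemma ZZ_simps[simp]: "ZZ 0 = 1" "ZZ (Suc k) = 0" by (auto simp: ZZ_def)

lemma sum_pick:
  fixes p x :: complex
  assumes "1 \<le> j" "j \<le> m"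
  shows "(\<Sum>l\<in>{1..m}. if l = j then p else x) = p + (of_nat m - 1) * x"
proof -
  have "(\<Sum>l\<in>{1..m}. if l = j then p else x) = p + (\<Sum>l\<in>{1..m}-{j}. if l = j then p else x)"
    using assms by (subst sum.remove[of _ j]) auto
  also have "\<dots> = p + (\<Sum>l\<in>{1..m}-{j}. x)" by (intro arg_cong2[where f="(+)"] sum.cong) auto
  also have "\<dots> = p + (of_nat m - 1) * x" using assms by (simp add: of_nat_diff)
  finally show ?thesis .
qed

definition Gc :: "nat \<Rightarrow> complex \<Rightarrow> complex \<Rightarrow> nat \<Rightarrow> nat \<Rightarrow> complex" where
  "Gc m s a k l = (let M = (of_nat m :: complex) in
     if l = 0 then a * ZZ k + M * a * EE s k
     else if l \<le> m then a * EE s (Suc k) else a * (EE s k - ZZ k))"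

definition Gm :: "nat \<Rightarrow> complex \<Rightarrow> complex \<Rightarrow> complex \<Rightarrow> nat \<Rightarrow> nat \<Rightarrow> nat \<Rightarrow> complex" where
  "Gm m s a b j k l = (
     if l = 0 then a * EE s (Suc k)
     else if l = j then ee k*(1-b) + b * EE s k
     else if l \<le> m then - b * ee k + b * EE s k
     else if l = j+m then oo k*(1-b) + a * b * EE s (Suc k)
     else - b * oo k + a * b * EE s (Suc k))"

definition Gl :: "nat \<Rightarrow> complex \<Rightarrow> complex \<Rightarrow> complex \<Rightarrow> nat \<Rightarrow> nat \<Rightarrow> nat \<Rightarrow> complex" where
  "Gl m s a b j k l = (
     if l = 0 then a * (EE s k - ZZ k)
     else if l = j then oo k*(1-b) + a * b * EE s (Suc k)
     else if l \<le> m then - b * oo k + a * b * EE s (Suc k)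
     else if l = j+m then ee k*(1-b) + a * ZZ k + a * b * EE s k
     else - b * ee k + a * ZZ k + a * b * EE s k)"

lemma col_c:
  assumes s: "s^2 = of_nat m + 1" and a: "a * (of_nat m + 1) = 1" and i: "i < 2*m+1"
  shows "(subdiv_star_adj m ^\<^sub>m k) $$ (0,i) = Gc m s a k i"
proof (rule pow_row[OF _ _ _ i])
  fix l assume "l < 2*m+1"
  then show "Gc m s a 0 l = (if l = 0 then 1 else 0)"
    using a by (auto simp: Gc_def Let_def algebra_simps)
next
  fix k i assume i: "i < 2*m+1"
  show "(if i = 0 then (\<Sum>l\<in>{1..m}. Gc m s a k l) else if i \<le> m then Gc m s a k 0 + Gc m s a k (i+m) else Gc m s a k (i-m)) = Gc m s a (Suc k) i"
  proof -
    have "(\<Sum>l\<in>{1..m}. Gc m s a k l) = (\<Sum>l\<in>{1..m}. a * EE s (Suc k))"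
      by (rule sum.cong) (auto simp: Gc_def Let_def)
    then show ?thesis using i s a
      by (auto simp: Gc_def Let_def algebra_simps)
  qed
qed simp

lemma hab:
  fixes a b M :: complex
  assumes a: "a * (M + 1) = 1" and b: "b * M = 1"
  shows "a + a * b = b" "a * b * M = a"
proof -
  have "a + a*b = a*(b*M) + a*b" using b by simp
  also have "\<dots> = b*(a*(M+1))" by (simp add: algebra_simps)
  also have "\<dots> = b" using a by simp
  finally show "a + a * b = b" .
  show "a * b * M = a" using b by (simp add: mult.assoc)
qed

lemma col_m:
  assumes s: "s^2 = of_nat m + 1" and a: "a * (of_nat m + 1) = 1" and b: "b * of_nat m = 1"
    and i: "i < 2*m+1" and j: "1 \<le> j" "j \<le> m"
  shows "(subdiv_star_adj m ^\<^sub>m k) $$ (j,i) = Gm m s a b j k i"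
proof (rule pow_row[OF _ _ _ i])
  fix l assume "l < 2*m+1" then show "Gm m s a b j 0 l = (if l = j then 1 else 0)"
    using j by (auto simp: Gm_def)
next
  fix k i assume i: "i < 2*m+1"
  have h1: "a + a * b = b" and h3: "a * b * of_nat m = a" using hab[OF a b] by auto
  have "a * b * s^2 = b * (a * (of_nat m + 1))" by (simp add: s algebra_simps)
  then have h2: "a * b * s^2 = b" using a by simp
  define P where "P = ee k*(1-b) + b * EE s k"
  define X where "X = - b * ee k + b * EE s k"
  have "(\<Sum>l\<in>{1..m}. Gm m s a b j k l) = (\<Sum>l\<in>{1..m}. if l = j then P else X)"
    using j by (intro sum.cong) (auto simp: Gm_def P_def X_def)
  also have "\<dots> = P + (of_nat m - 1) * X" by (rule sum_pick[OF j])
  finally have sm: "(\<Sum>l\<in>{1..m}. Gm m s a b j k l) = P + (of_nat m - 1) * X" .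
  have jn0: "j \<noteq> 0" and mn0: "m \<noteq> 0" using j by auto
  consider "i = 0" | "1 \<le> i" "i \<le> m" "i = j" | "1 \<le> i" "i \<le> m" "i \<noteq> j"
    | "m < i" "i = j + m" | "m < i" "i \<noteq> j + m" by linarith
  then show "(if i = 0 then (\<Sum>l\<in>{1..m}. Gm m s a b j k l) else if i \<le> m then Gm m s a b j k 0 + Gm m s a b j k (i+m) else Gm m s a b j k (i-m)) = Gm m s a b j (Suc k) i"
  proof cases
    case 1
    have "P + (of_nat m - 1) * X = ee k * (1 - b * of_nat m) + EE s k * (b * of_nat m)"
      unfolding P_def X_def by (simp add: algebra_simps)
    also have "\<dots> = (a * (of_nat m + 1)) * EE s k" using a b by simp
    also have "\<dots> = a * EE s (Suc (Suc k))" unfolding EE_simps s by simp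
    finally have "P + (of_nat m - 1) * X = a * EE s (Suc (Suc k))" .
    then show ?thesis using sm 1 by (simp add: Gm_def)
  next
    case 2
    have "Gm m s a b j k 0 + Gm m s a b j k (i+m) = (a + a*b) * EE s (Suc k) + oo k * (1-b)"
      using 2 jn0 by (simp add: Gm_def algebra_simps)
    moreover have "Gm m s a b j (Suc k) i = b * EE s (Suc k) + oo k * (1-b)"
      using 2 jn0 by (simp add: Gm_def algebra_simps)
    ultimately show ?thesis using 2 h1 by simp
  next
    case 3
    have ne: "i + m \<noteq> j" using 3 j by auto
    have "Gm m s a b j k 0 + Gm m s a b j k (i+m) = (a + a*b) * EE s (Suc k) - b * oo k"
      using 3 jn0 ne by (simp add: Gm_def algebra_simps)
    moreover have "Gm m s a b j (Suc k) i = b * EE s (Suc k) - b * oo k"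
      using 3 jn0 ne by (simp add: Gm_def algebra_simps)
    ultimately show ?thesis using 3 h1 by simp
  next
    case 4
    have "Gm m s a b j k (i-m) = ee k * (1-b) + b * EE s k"
      using 4 jn0 mn0 by (simp add: Gm_def algebra_simps)
    moreover have "Gm m s a b j (Suc k) i = ee k * (1-b) + (a * b * s^2) * EE s k"
      using 4 jn0 mn0 by (simp add: Gm_def algebra_simps)
    ultimately show ?thesis using 4 h2 by simp
  next
    case 5
    have f5: "i - m \<noteq> j" "i - m \<le> m" "i - m \<noteq> 0" "i \<noteq> j" "\<not> i \<le> m" using 5 i j by auto
    have "Gm m s a b j k (i-m) = b * EE s k - b * ee k"
      using f5 jn0 mn0 by (simp add: Gm_def algebra_simps)
    moreover have "Gm m s a b j (Suc k) i = (a * b * s^2) * EE s k - b * ee k"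
      using f5 jn0 mn0 by (simp add: Gm_def algebra_simps)
    ultimately show ?thesis using 5 h2 by simp
  qed
qed (use j in simp)

lemma col_l:
  assumes s: "s^2 = of_nat m + 1" and a: "a * (of_nat m + 1) = 1" and b: "b * of_nat m = 1"
    and i: "i < 2*m+1" and j: "1 \<le> j" "j \<le> m"
  shows "(subdiv_star_adj m ^\<^sub>m k) $$ (j+m,i) = Gl m s a b j k i"
proof (rule pow_row[OF _ _ _ i])
  have h1: "a + a * b = b" and h3: "a * b * of_nat m = a" using hab[OF a b] by auto
  fix l assume "l < 2*m+1" 
  have jn0: "j \<noteq> 0" and mn0: "m \<noteq> 0" using j by auto
  consider "l = 0" | "l \<noteq> 0" "l = j" | "l \<noteq> 0" "l \<noteq> j" "l \<le> m" | "l = j + m" | "l \<noteq> 0" "l \<noteq> j" "\<not> l \<le> m" "l \<noteq> j + m"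
    by auto
  then show "Gl m s a b j 0 l = (if l = j+m then 1 else 0)"
  proof cases
    case 4
    have "Gl m s a b j 0 l = 1 - b + (a + a * b)" using 4 jn0 mn0 by (simp add: Gl_def algebra_simps)
    then show ?thesis using h1 4 by simp
  next
    case 5
    have "Gl m s a b j 0 l = (a + a * b) - b" using 5 jn0 by (simp add: Gl_def algebra_simps)
    then show ?thesis using h1 5 by simp
  qed (use jn0 mn0 in \<open>auto simp: Gl_def\<close>)
next
  fix k i assume i: "i < 2*m+1"
  have h1: "a + a * b = b" and h3: "a * b * of_nat m = a" using hab[OF a b] by auto
  have "a * b * s^2 = b * (a * (of_nat m + 1))" by (simp add: s algebra_simps)
  then have h2: "a * b * s^2 = b" using a by simp
  define P where "P = oo k*(1-b) + a * b * EE s (Suc k)"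
  define X where "X = - b * oo k + a * b * EE s (Suc k)"
  have "(\<Sum>l\<in>{1..m}. Gl m s a b j k l) = (\<Sum>l\<in>{1..m}. if l = j then P else X)"
    using j by (intro sum.cong) (auto simp: Gl_def P_def X_def)
  also have "\<dots> = P + (of_nat m - 1) * X" by (rule sum_pick[OF j])
  finally have sm: "(\<Sum>l\<in>{1..m}. Gl m s a b j k l) = P + (of_nat m - 1) * X" .
  have jn0: "j \<noteq> 0" and mn0: "m \<noteq> 0" using j by auto
  consider "i = 0" | "1 \<le> i" "i \<le> m" "i = j" | "1 \<le> i" "i \<le> m" "i \<noteq> j"
    | "m < i" "i = j + m" | "m < i" "i \<noteq> j + m" by linarith
  then show "(if i = 0 then (\<Sum>l\<in>{1..m}. Gl m s a b j k l) else if i \<le> m then Gl m s a b j k 0 + Gl m s a b j k (i+m) else Gl m s a b j k (i-m)) = Gl m s a b j (Suc k) i"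
  proof cases
    case 1
    have "P + (of_nat m - 1) * X = oo k * (1 - b * of_nat m) + EE s (Suc k) * (a * b * of_nat m)"
      unfolding P_def X_def by (simp add: algebra_simps)
    also have "\<dots> = a * (EE s (Suc k) - ZZ (Suc k))" using h3 b by simp
    finally show ?thesis using sm 1 by (simp add: Gl_def)
  next
    case 2
    have "Gl m s a b j k 0 + Gl m s a b j k (i+m) = (a + a*b) * EE s k + ee k * (1-b)"
      using 2 jn0 by (simp add: Gl_def algebra_simps)
    moreover have "Gl m s a b j (Suc k) i = (a * b * s^2) * EE s k + ee k * (1-b)"
      using 2 jn0 by (simp add: Gl_def algebra_simps)
    ultimately show ?thesis using 2 h1 h2 by simp
  next
    case 3
    have ne: "i + m \<noteq> j" using 3 j by auto
    have "Gl m s a b j k 0 + Gl m s a b j k (i+m) = (a + a*b) * EE s k - b * ee k"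
      using 3 jn0 ne by (simp add: Gl_def algebra_simps)
    moreover have "Gl m s a b j (Suc k) i = (a * b * s^2) * EE s k - b * ee k"
      using 3 jn0 ne by (simp add: Gl_def algebra_simps)
    ultimately show ?thesis using 3 h1 h2 by simp
  next
    case 4
    then show ?thesis using jn0 mn0 by (simp add: Gl_def)
  next
    case 5
    have f5: "i - m \<noteq> j" "i - m \<le> m" "i - m \<noteq> 0" "i \<noteq> j" "\<not> i \<le> m" "i \<noteq> j + m" using 5 i j by auto
    then show ?thesis using jn0 mn0 by (simp add: Gl_def)
  qed
qed (use j in simp)

lemma exp_sums: "(\<lambda>k. w^k / of_nat (fact k)) sums exp (w::complex)"
proof -
  have "(\<lambda>k. w^k /\<^sub>R fact k) = (\<lambda>k. w^k / of_nat (fact k))"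
    by (rule ext) (simp add: scaleR_conv_of_real divide_inverse mult.commute)
  then show ?thesis using exp_converges[of w] by simp
qed

lemma exp_cos: "exp (\<i> * of_real x) + exp (- (\<i> * of_real x)) = 2 * of_real (cos x)"
proof -
  have "exp (\<i> * of_real x) = cis x" by (simp add: cis_conv_exp)
  moreover have "exp (- (\<i> * of_real x)) = cis (-x)" by (simp add: cis_conv_exp)
  ultimately show ?thesis by (simp add: complex_eq_iff)
qed

lemma EE_sums:
  fixes \<sigma> t :: real
  shows "(\<lambda>k. (\<i> * of_real t)^k / of_nat (fact k) * EE (of_real \<sigma>) k) sums of_real (cos (\<sigma>*t))"
proof -
  let ?w = "\<i> * of_real (\<sigma>*t) :: complex"
  have "(\<lambda>k. (?w^k / of_nat (fact k) + (-?w)^k / of_nat (fact k)) / 2) sums ((exp ?w + exp (-?w))/2)"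
    by (intro sums_divide sums_add exp_sums)
  moreover have "(\<lambda>k. (?w^k / of_nat (fact k) + (-?w)^k / of_nat (fact k)) / 2) =
     (\<lambda>k. (\<i> * of_real t)^k / of_nat (fact k) * EE (of_real \<sigma>) k)"
  proof (rule ext)
    fix k
    have "(-?w)^k = (\<i> * of_real t)^k * (- of_real \<sigma>)^k"
      by (simp only: power_mult_distrib[symmetric]) (simp add: algebra_simps)
    moreover have "?w^k = (\<i> * of_real t)^k * (of_real \<sigma>)^k"
      by (simp only: power_mult_distrib[symmetric]) (simp add: algebra_simps)
    ultimately show "(?w^k / of_nat (fact k) + (-?w)^k / of_nat (fact k)) / 2 =
       (\<i> * of_real t)^k / of_nat (fact k) * EE (of_real \<sigma>) k"
      by (simp add: EE_def field_simps)
  qed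
  moreover have "(exp ?w + exp (-?w))/2 = of_real (cos (\<sigma>*t))" using exp_cos[of "\<sigma>*t"] by simp
  ultimately show ?thesis by simp
qed

lemma ee_EE: "ee k = EE 1 k" by (simp add: ee_def EE_def)

lemma ZZ_sums: "(\<lambda>k. (w::complex)^k / of_nat (fact k) * ZZ k) sums 1"
proof -
  have "(\<lambda>k. w^k / of_nat (fact k) * ZZ k) = (\<lambda>k. if k = 0 then 1 else 0)"
    by (rule ext) (simp add: ZZ_def)
  then show ?thesis using sums_single[of 0 "\<lambda>_. 1::complex"] by simp
qed

lemma diag_sums:
  fixes \<sigma> t :: real and \<alpha> \<beta> \<gamma> :: complex
  shows "(\<lambda>k. (\<i> * of_real t)^k / of_nat (fact k) * (\<alpha> * ee k + \<beta> * ZZ k + \<gamma> * EE (of_real \<sigma>) k))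
     sums (\<alpha> * of_real (cos t) + \<beta> + \<gamma> * of_real (cos (\<sigma>*t)))"
proof -
  have 1: "(\<lambda>k. (\<i> * of_real t)^k / of_nat (fact k) * ee k) sums of_real (cos t)"
    using EE_sums[of t 1] unfolding ee_EE by simp
  have "(\<lambda>k. \<alpha> * ((\<i> * of_real t)^k / of_nat (fact k) * ee k) + \<beta> * ((\<i> * of_real t)^k / of_nat (fact k) * ZZ k)
     + \<gamma> * ((\<i> * of_real t)^k / of_nat (fact k) * EE (of_real \<sigma>) k))
     sums (\<alpha> * of_real (cos t) + \<beta> * 1 + \<gamma> * of_real (cos (\<sigma>*t)))"
    by (intro sums_add sums_mult 1 ZZ_sums EE_sums)
  moreover have "(\<lambda>k. \<alpha> * ((\<i> * of_real t)^k / of_nat (fact k) * ee k) + \<beta> * ((\<i> * of_real t)^k / of_nat (fact k) * ZZ k)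
     + \<gamma> * ((\<i> * of_real t)^k / of_nat (fact k) * EE (of_real \<sigma>) k)) =
     (\<lambda>k. (\<i> * of_real t)^k / of_nat (fact k) * (\<alpha> * ee k + \<beta> * ZZ k + \<gamma> * EE (of_real \<sigma>) k))"
    by (rule ext) (simp add: algebra_simps add_divide_distrib)
  ultimately show ?thesis by simp
qed

lemma entry_from:
  assumes "\<And>k. (A ^\<^sub>m k) $$ (u,u) = \<alpha> * ee k + \<beta> * ZZ k + \<gamma> * EE (of_real \<sigma>) k"
  shows "transition_entry A t u u = \<alpha> * of_real (cos t) + \<beta> + \<gamma> * of_real (cos (\<sigma>*t))"
  unfolding transition_entry_def assms using diag_sums[of t \<alpha> \<beta> \<gamma> \<sigma>] by (simp add: sums_iff)

lemma not_sed_from: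
  assumes "\<exists>t>0. transition_entry A t u u = 0"
  shows "\<not> sedentary A u"
proof
  assume "sedentary A u"
  then obtain C :: real where C: "0 < C" "(INF t\<in>{0<..}. cmod (transition_entry A t u u)) \<ge> C"
    unfolding sedentary_def by auto
  obtain t where t: "t > 0" "transition_entry A t u u = 0" using assms by auto
  have "(INF t\<in>{0<..}. cmod (transition_entry A t u u)) \<le> cmod (transition_entry A t u u)"
    by (rule cINF_lower) (auto intro: bdd_belowI[where m=0] simp: t)
  then show False using C t by simp
qed

lemma zero_exists:
  fixes f :: "real \<Rightarrow> real"
  assumes "f 0 > 0" "f B \<le> 0" "B > 0" "\<And>x. isCont f x"
  shows "\<exists>t>0. f t = 0"
proof -
  obtain x where "0 \<le> x" "x \<le> B" "f x = 0" using IVT2[of f B 0 0] assms by auto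
  moreover then have "x \<noteq> 0" using assms by auto
  ultimately show ?thesis by (intro exI[of _ x]) auto
qed

theorem corollary19:
  fixes m u :: nat
  assumes "m \<ge> 2" and "u < 2*m+1"
  shows "\<not> sedentary (subdiv_star_adj m) u"
proof (rule not_sed_from)
  define \<sigma> where "\<sigma> = sqrt (real m + 1)"
  define s where "s = (of_real \<sigma> :: complex)"
  define a where "a = 1 / (of_nat m + 1 :: complex)"
  define b where "b = 1 / (of_nat m :: complex)"
  define M where "M = real m"
  have mpos: "M \<ge> 2" using assms(1) by (simp add: M_def)
  have \<sigma>pos: "\<sigma> > 0" unfolding \<sigma>_def by simp
  have \<sigma>2: "\<sigma>^2 = M + 1" unfolding \<sigma>_def M_def by simp
  have s2: "s^2 = of_nat m + 1" unfolding s_def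
    by (metis \<sigma>2 M_def of_real_power of_real_add of_real_of_nat_eq of_real_1)
  have m1: "(of_nat m :: complex) + 1 \<noteq> 0"
    by (metis of_nat_Suc of_nat_eq_0_iff add.commute nat.simps(3))
  have ha: "a * (of_nat m + 1) = 1" unfolding a_def using m1 by simp
  have hb: "b * of_nat m = 1" unfolding b_def using assms(1) by simp
  have aR: "a = of_real (1/(M+1))" unfolding a_def M_def by simp
  have bR: "b = of_real (1/M)" unfolding b_def M_def by simp
  have cont: "\<And>f::real\<Rightarrow>real. (\<And>x. isCont f x) \<Longrightarrow> (\<And>x. isCont f x)" by auto
  consider "u = 0" | "1 \<le> u" "u \<le> m" | j where "u = j + m" "1 \<le> j" "j \<le> m"
  proof -
    have "u = 0 \<or> (1 \<le> u \<and> u \<le> m) \<or> (u = (u-m) + m \<and> 1 \<le> u-m \<and> u-m \<le> m)"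
      using assms(2) by auto
    then show thesis using that by blast
  qed
  then show "\<exists>t>0. transition_entry (subdiv_star_adj m) t u u = 0"
  proof cases
    case 1
    have "\<And>k. (subdiv_star_adj m ^\<^sub>m k) $$ (u,u) = 0 * ee k + a * ZZ k + (of_nat m * a) * EE (of_real \<sigma>) k"
      using col_c[OF s2 ha, of 0] 1 unfolding s_def by (simp add: Gc_def)
    note E = entry_from[OF this]
    define f where "f t = 1/(M+1) + M/(M+1) * cos (\<sigma>*t)" for t
    have te: "\<And>t. transition_entry (subdiv_star_adj m) t u u = of_real (f t)"
      using E by (simp add: f_def aR M_def)
    have "\<exists>t>0. f t = 0"
    proof (rule zero_exists)
      show "f 0 > 0" using mpos by (simp add: f_def field_simps)
      have "cos (\<sigma> * (pi/\<sigma>)) = -1" using \<sigma>pos by simp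
      then show "f (pi/\<sigma>) \<le> 0" using mpos by (simp add: f_def field_simps)
      show "pi/\<sigma> > 0" using \<sigma>pos by simp
      show "isCont f x" for x unfolding f_def by (intro continuous_intros)
    qed
    then obtain t where "t > 0" "f t = 0" by auto
    then show ?thesis using te[of t] by auto
  next
    case 2
    have "\<And>k. (subdiv_star_adj m ^\<^sub>m k) $$ (u,u) = (1 - b) * ee k + 0 * ZZ k + b * EE (of_real \<sigma>) k"
      using col_m[OF s2 ha hb _ 2, of u] 2 unfolding s_def by (simp add: Gm_def)
    note E = entry_from[OF this]
    define f where "f t = (1 - 1/M) * cos t + 1/M * cos (\<sigma>*t)" for t
    have te: "\<And>t. transition_entry (subdiv_star_adj m) t u u = of_real (f t)"
      using E by (simp add: f_def bR M_def)
    have "\<exists>t>0. f t = 0"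
    proof (rule zero_exists)
      show "f 0 > 0" using mpos by (simp add: f_def field_simps)
      have c: "cos (\<sigma> * pi) \<le> 1" by simp
      have "f pi = (1 - M + cos (\<sigma>*pi))/M" using mpos by (simp add: f_def field_simps)
      also have "\<dots> \<le> 0"
      proof (rule divide_nonpos_pos)
        show "1 - M + cos (\<sigma>*pi) \<le> 0" using mpos c by linarith
      qed (use mpos in simp)
      finally show "f pi \<le> 0" .
      show "pi > 0" by simp
      show "isCont f x" for x unfolding f_def by (intro continuous_intros)
    qed
    then obtain t where "t > 0" "f t = 0" by auto
    then show ?thesis using te[of t] by auto
  next
    case 3
    have "\<And>k. (subdiv_star_adj m ^\<^sub>m k) $$ (u,u) = (1 - b) * ee k + a * ZZ k + (a * b) * EE (of_real \<sigma>) k"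
      using col_l[OF s2 ha hb _ 3(2,3), of u] 3 unfolding s_def by (simp add: Gl_def)
    note E = entry_from[OF this]
    define f where "f t = (1 - 1/M) * cos t + 1/(M+1) + 1/(M*(M+1)) * cos (\<sigma>*t)" for t
    have te: "\<And>t. transition_entry (subdiv_star_adj m) t u u = of_real (f t)"
      using E by (simp add: f_def aR bR M_def)
    have "\<exists>t>0. f t = 0"
    proof (rule zero_exists)
      have nz: "M + M*M \<noteq> 0" using mpos by (metis add_pos_pos mult_pos_pos less_le_trans zero_less_numeral order.strict_iff_not)
      have "f 0 = 1" using mpos nz by (simp add: f_def field_simps)
      then show "f 0 > 0" by simp
      have c: "cos (\<sigma> * pi) \<le> 1" by simp
      have M0: "M \<noteq> 0" "M + 1 \<noteq> 0" using mpos by auto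
      have f1: "(M+1)/(M*(M+1)) = 1/M" using M0 by simp
      have f2: "M/(M*(M+1)) = 1/(M+1)" using M0 by simp
      have f3: "(M+1)/(M*(M+1)) = M/(M*(M+1)) + 1/(M*(M+1))" by (simp add: add_divide_distrib)
      have e1: "1/(M+1) + 1/(M*(M+1)) = 1/M" using f1 f2 f3 by linarith
      have e2: "1/(M*(M+1)) * cos (\<sigma>*pi) \<le> 1/(M*(M+1))"
        using c mpos by (intro mult_left_le) auto
      have e3: "1/M \<le> 1/2" using mpos by simp
      have "f pi = -(1 - 1/M) + 1/(M+1) + 1/(M*(M+1)) * cos (\<sigma>*pi)" by (simp add: f_def)
      also have "\<dots> \<le> 0" using e1 e2 e3 by linarith
      finally show "f pi \<le> 0" .
      show "pi > 0" by simp
      show "isCont f x" for x unfolding f_def by (intro continuous_intros)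
    qed
    then obtain t where "t > 0" "f t = 0" by auto
    then show ?thesis using te[of t] by auto
  qed
qed

end
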